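(* Fix $0<\beta<1$. For every general channel $\mathbf W$, every sequence of cost functions $\mathbf c=\{c_n\}$ and every $K$ with $\mathcal X_{n,c,K}\ne\emptyset$ for all $n$, and all reals $R_1,R_2$, \[ C_p(R_2,R_1\mid\mathbf W,\mathbf c,K)=\inf_{\mathbf P\in\mathcal P_{c,K}}\lim_{\gamma\downarrow0}I_p(R_2-\gamma,R_1\mid\mathbf P,\mathbf W)=\inf_{\mathbf P\in\mathcal P_{c,K}}\sup_{\mathbf Q}\lim_{\gamma\downarrow0}J_p(R_2-\gamma,R_1\mid\mathbf P,\mathbf Q,\mathbf W), \] and for every $0\le\epsilon<1$, \[ C(\epsilon,R_1\mid\mathbf W,\mathbf c,K)=\sup_{\mathbf P\in\mathcal P_{c,K}}I(\epsilon,R_1\mid\mathbf P,\mathbf W)=\sup_{\mathbf P\in\mathcal P_{c,K}}\inf_{\mathbf Q}J(\epsilon,R_1\mid\mathbf P,\mathbf Q,\mathbf W). \]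
   Context: A general channel $\mathbf W=\{W^n\}$: finite (or countable) sets $\mathcal X_n,\mathcal Y_n$, distributions $W^n_x$ on $\mathcal Y_n$. $c_n:\mathcal X_n\to\mathbb R$; $\mathcal X_{n,c,K}=\{x\in\mathcal X_n:c_n(x)\le nK\}$. $\mathcal P_{c,K}$ is the set of sequences $\mathbf P=\{P^n\}$ of distributions on $\mathcal X_n$ with $\mathrm{supp}(P^n)\subset\mathcal X_{n,c,K}$; $\mathbf Q=\{Q^n\}$ ranges over sequences of distributions on $\mathcal Y_n$; $W^n_{P^n}=\sum_xP^n(x)W^n_x$; logs natural. $I_p(R_2,R_1|\mathbf P,\mathbf W)=\limsup_n\sum_xP^n(x)W^n_x\{\frac1{n^\beta}(\log\frac{W^n_x(y)}{W^n_{P^n}(y)}-nR_1)<R_2\}$, $I(\epsilon,R_1|\mathbf P,\mathbf W)=\sup\{R_2:I_p(R_2,R_1|\mathbf P,\mathbf W)\le\epsilon\}$; $J_p,J$ are the same with $W^n_{P^n}$ replaced by $Q^n$. A code $\Phi=(N,\phi,\{\mathcal D_i\})$ for $W^n$: $\phi:\{1..N\}\to\mathcal X_n$, disjoint $\mathcal D_i\subset\mathcal Y_n$, $|\Phi|=N$, $\mathrm{supp}(\Phi)=\{\phi(i)\}$, $P_{e,W^n}(\Phi)=\frac1N\sum_i(1-W^n_{\phi(i)}(\mathcal D_i))$. Over code sequences with $\mathrm{supp}(\Phi_n)\subset\mathcal X_{n,c,K}$: $C_p(R_2,R_1|\mathbf W,\mathbf c,K)=\inf\{\limsup_nP_{e,W^n}(\Phi_n):\liminf_n\frac1{n^\beta}(\log|\Phi_n|-nR_1)\ge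 R_2\}$, $C(\epsilon,R_1|\mathbf W,\mathbf c,K)=\sup\{\liminf_n\frac1{n^\beta}(\log|\Phi_n|-nR_1):\limsup_nP_{e,W^n}(\Phi_n)\le\epsilon\}$. *)

theory Defs
  imports "HOL-Probability.Probability"
begin

text \<open>General channel: W n x is the output distribution W^n_x on a countable output type;
  input alphabet X n (a subset of a countable type); cost c n; exponent beta.\<close>

definition Xnck :: "(nat \<Rightarrow> 'x set) \<Rightarrow> (nat \<Rightarrow> 'x \<Rightarrow> real) \<Rightarrow> real \<Rightarrow> nat \<Rightarrow> 'x set" where
  "Xnck X c K n = {x \<in> X n. c n x \<le> real n * K}"

definition Pck :: "(nat \<Rightarrow> 'x set) \<Rightarrow> (nat \<Rightarrow> 'x \<Rightarrow> real) \<Rightarrow> real \<Rightarrow> (nat \<Rightarrow> 'x pmf) set" where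
  "Pck X c K = {P. \<forall>n. set_pmf (P n) \<subseteq> Xnck X c K n}"

text \<open>The event {y : n^(-beta) (log (Wx(y)/Q(y)) - n R1) < R2}; outputs with Q(y) = 0 have
  information density +infinity and hence are excluded.\<close>
definition dens_event :: "real \<Rightarrow> nat \<Rightarrow> real \<Rightarrow> real \<Rightarrow> 'y pmf \<Rightarrow> 'y pmf \<Rightarrow> 'y set" where
  "dens_event \<beta> n R2 R1 Wx Q =
     {y. pmf Q y > 0 \<and> (ln (pmf Wx y / pmf Q y) - real n * R1) / (real n powr \<beta>) < R2}"

definition Jp :: "real \<Rightarrow> (nat \<Rightarrow> 'x \<Rightarrow> 'y pmf) \<Rightarrow> (nat \<Rightarrow> 'x pmf) \<Rightarrow> (nat \<Rightarrow> 'y pmf)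
                   \<Rightarrow> real \<Rightarrow> real \<Rightarrow> ereal" where
  "Jp \<beta> W P Q R2 R1 = limsup (\<lambda>n. ereal (measure_pmf.expectation (P n)
      (\<lambda>x. measure_pmf.prob (W n x) (dens_event \<beta> n R2 R1 (W n x) (Q n)))))"

definition out_dist :: "(nat \<Rightarrow> 'x \<Rightarrow> 'y pmf) \<Rightarrow> (nat \<Rightarrow> 'x pmf) \<Rightarrow> nat \<Rightarrow> 'y pmf" where
  "out_dist W P n = bind_pmf (P n) (W n)"

definition Ip :: "real \<Rightarrow> (nat \<Rightarrow> 'x \<Rightarrow> 'y pmf) \<Rightarrow> (nat \<Rightarrow> 'x pmf) \<Rightarrow> real \<Rightarrow> real \<Rightarrow> ereal" where
  "Ip \<beta> W P R2 R1 = Jp \<beta> W P (out_dist W P) R2 R1"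

definition Ieps :: "real \<Rightarrow> (nat \<Rightarrow> 'x \<Rightarrow> 'y pmf) \<Rightarrow> (nat \<Rightarrow> 'x pmf) \<Rightarrow> real \<Rightarrow> real \<Rightarrow> ereal" where
  "Ieps \<beta> W P \<epsilon> R1 = Sup (ereal ` {R2. Ip \<beta> W P R2 R1 \<le> ereal \<epsilon>})"

definition Jeps :: "real \<Rightarrow> (nat \<Rightarrow> 'x \<Rightarrow> 'y pmf) \<Rightarrow> (nat \<Rightarrow> 'x pmf) \<Rightarrow> (nat \<Rightarrow> 'y pmf)
                     \<Rightarrow> real \<Rightarrow> real \<Rightarrow> ereal" where
  "Jeps \<beta> W P Q \<epsilon> R1 = Sup (ereal ` {R2. Jp \<beta> W P Q R2 R1 \<le> ereal \<epsilon>})"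

text \<open>A code (N, phi, D): messages 1..N, encoder phi, decoding sets D i.\<close>
type_synonym ('x, 'y) code = "nat \<times> (nat \<Rightarrow> 'x) \<times> (nat \<Rightarrow> 'y set)"

definition code_size :: "('x, 'y) code \<Rightarrow> nat" where
  "code_size \<Phi> = fst \<Phi>"

definition is_code_in :: "'x set \<Rightarrow> ('x, 'y) code \<Rightarrow> bool" where
  "is_code_in S \<Phi> = (case \<Phi> of (N, \<phi>, D) \<Rightarrow>
      N \<ge> 1 \<and> \<phi> ` {1..N} \<subseteq> S \<and>
      (\<forall>i\<in>{1..N}. \<forall>j\<in>{1..N}. i \<noteq> j \<longrightarrow> D i \<inter> D j = {}))"

definition err_prob :: "('x \<Rightarrow> 'y pmf) \<Rightarrow> ('x, 'y) code \<Rightarrow> real" where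
  "err_prob Wn \<Phi> = (case \<Phi> of (N, \<phi>, D) \<Rightarrow>
      (\<Sum>i=1..N. 1 - measure_pmf.prob (Wn (\<phi> i)) (D i)) / real N)"

definition code_rate :: "real \<Rightarrow> real \<Rightarrow> (nat \<Rightarrow> ('x, 'y) code) \<Rightarrow> ereal" where
  "code_rate \<beta> R1 \<Phi> = liminf (\<lambda>n. ereal ((ln (real (code_size (\<Phi> n))) - real n * R1) / (real n powr \<beta>)))"

definition code_err :: "(nat \<Rightarrow> 'x \<Rightarrow> 'y pmf) \<Rightarrow> (nat \<Rightarrow> ('x, 'y) code) \<Rightarrow> ereal" where
  "code_err W \<Phi> = limsup (\<lambda>n. ereal (err_prob (W n) (\<Phi> n)))"

definition admissible_codes :: "(nat \<Rightarrow> 'x set) \<Rightarrow> (nat \<Rightarrow> 'x \<Rightarrow> real) \<Rightarrow> real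
                                 \<Rightarrow> (nat \<Rightarrow> ('x, 'y) code) set" where
  "admissible_codes X c K = {\<Phi>. \<forall>n. is_code_in (Xnck X c K n) (\<Phi> n)}"

definition Cp :: "real \<Rightarrow> (nat \<Rightarrow> 'x \<Rightarrow> 'y pmf) \<Rightarrow> (nat \<Rightarrow> 'x set) \<Rightarrow> (nat \<Rightarrow> 'x \<Rightarrow> real) \<Rightarrow> real
                   \<Rightarrow> real \<Rightarrow> real \<Rightarrow> ereal" where
  "Cp \<beta> W X c K R2 R1 = Inf {code_err W \<Phi> | \<Phi>.
      \<Phi> \<in> admissible_codes X c K \<and> code_rate \<beta> R1 \<Phi> \<ge> ereal R2}"

definition Ceps :: "real \<Rightarrow> (nat \<Rightarrow> 'x \<Rightarrow> 'y pmf) \<Rightarrow> (nat \<Rightarrow> 'x set) \<Rightarrow> (nat \<Rightarrow> 'x \<Rightarrow> real) \<Rightarrow> real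
                   \<Rightarrow> real \<Rightarrow> real \<Rightarrow> ereal" where
  "Ceps \<beta> W X c K \<epsilon> R1 = Sup {code_rate \<beta> R1 \<Phi> | \<Phi>.
      \<Phi> \<in> admissible_codes X c K \<and> code_err W \<Phi> \<le> ereal \<epsilon>}"

end

theory Submission
  imports Defs
begin


lemma integrable_pmf_bounded:
  fixes f :: "'a \<Rightarrow> real"
  assumes "\<And>x. \<bar>f x\<bar> \<le> B"
  shows "integrable (measure_pmf p) f"
  by (rule measure_pmf.integrable_const_bound[where B=B]) (use assms in auto)

lemma integrable_prob_pmf [simp]:
  "integrable (measure_pmf p) (\<lambda>x. measure_pmf.prob (V x) (A x))"
  by (rule integrable_pmf_bounded[where B=1]) auto

lemma prob_bind_pmf:
  "measure_pmf.prob (bind_pmf p V) A = measure_pmf.expectation p (\<lambda>x. measure_pmf.prob (V x) A)"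
proof -
  have "emeasure (measure_pmf (bind_pmf p V)) A = (\<integral>\<^sup>+x. emeasure (measure_pmf (V x)) A \<partial>measure_pmf p)"
    by simp
  also have "\<dots> = (\<integral>\<^sup>+x. ennreal (measure_pmf.prob (V x) A) \<partial>measure_pmf p)"
    by (simp add: measure_pmf.emeasure_eq_measure)
  also have "\<dots> = ennreal (measure_pmf.expectation p (\<lambda>x. measure_pmf.prob (V x) A))"
    by (rule nn_integral_eq_integral) auto
  finally show ?thesis
    by (simp add: measure_pmf.emeasure_eq_measure integral_nonneg_AE)
qed

lemma expectation_le_const:
  fixes f :: "'a \<Rightarrow> real"
  assumes "integrable (measure_pmf p) f" "\<And>x. x \<in> set_pmf p \<Longrightarrow> f x \<le> c"
  shows "measure_pmf.expectation p f \<le> c"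
proof -
  have "measure_pmf.expectation p f \<le> measure_pmf.expectation p (\<lambda>_. c)"
    by (rule integral_mono_AE) (use assms in \<open>auto simp: AE_measure_pmf_iff\<close>)
  thus ?thesis by simp
qed

lemma prob_le_scaled:
  assumes "\<And>y. y \<in> A \<Longrightarrow> pmf q y \<le> c * pmf p y" "0 \<le> c"
  shows "measure_pmf.prob q A \<le> c * measure_pmf.prob p A"
proof -
  have "infsetsum (pmf q) A \<le> infsetsum (\<lambda>y. c * pmf p y) A"
    by (rule infsetsum_mono) (use assms in \<open>auto intro: abs_summable_on_cmult_right\<close>)
  also have "\<dots> = c * infsetsum (pmf p) A"
    by (rule infsetsum_cmult_right) auto
  finally show ?thesis by (simp add: measure_pmf_conv_infsetsum)
qed

lemma prob_mono_set_pmf: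
  assumes "A \<inter> set_pmf p \<subseteq> B"
  shows "measure_pmf.prob p A \<le> measure_pmf.prob p B"
proof -
  have "measure_pmf.prob p A = measure_pmf.prob p (A \<inter> set_pmf p)" by (simp add: measure_Int_set_pmf)
  also have "\<dots> \<le> measure_pmf.prob p B" by (rule measure_pmf.finite_measure_mono) (use assms in auto)
  finally show ?thesis .
qed

lemma prob_compl_pmf: "measure_pmf.prob p (- A) = 1 - measure_pmf.prob p A"
  using measure_pmf.prob_compl[of A p] by (simp add: Compl_eq_Diff_UNIV)


lemma feinstein_step:
  fixes p :: "'x pmf" and V :: "'x \<Rightarrow> 'y pmf" and a :: real and M m :: nat
  defines "q \<equiv> bind_pmf p V"
  defines "B \<equiv> (\<lambda>x. {y. exp a * pmf q y < pmf (V x) y})"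
  defines "\<epsilon> \<equiv> measure_pmf.expectation p (\<lambda>x. measure_pmf.prob (V x) {y. pmf (V x) y \<le> exp a * pmf q y}) + real M * exp (-a)"
  assumes mM: "m < M"
    and sub: "\<And>i. i \<in> {1..m} \<Longrightarrow> D i \<subseteq> B (\<phi> i)"
    and disj: "\<And>i j. i \<in> {1..m} \<Longrightarrow> j \<in> {1..m} \<Longrightarrow> i \<noteq> j \<Longrightarrow> D i \<inter> D j = {}"
  shows "\<exists>x\<in>set_pmf p. 1 - \<epsilon> \<le> measure_pmf.prob (V x) (B x - (\<Union>i\<in>{1..m}. D i))"
proof (rule ccontr)
  define U where "U = (\<Union>i\<in>{1..m}. D i)"
  define bad where "bad = (\<lambda>x. measure_pmf.prob (V x) {y. pmf (V x) y \<le> exp a * pmf q y})"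
  assume "\<not> ?thesis"
  hence lt: "\<And>x. x \<in> set_pmf p \<Longrightarrow> measure_pmf.prob (V x) (B x - U) \<le> 1 - \<epsilon>"
    unfolding U_def by force
  have cB: "-B x = {y. pmf (V x) y \<le> exp a * pmf q y}" for x
    unfolding B_def by auto
  have hB: "1 - bad x \<le> measure_pmf.prob (V x) (B x - U) + measure_pmf.prob (V x) U" for x
  proof -
    have "1 - bad x = measure_pmf.prob (V x) (B x)"
      using prob_compl_pmf[of "V x" "B x"] cB[of x] unfolding bad_def by simp
    also have "\<dots> \<le> measure_pmf.prob (V x) ((B x - U) \<union> U)"
      by (rule measure_pmf.finite_measure_mono) auto
    also have "\<dots> \<le> measure_pmf.prob (V x) (B x - U) + measure_pmf.prob (V x) U"
      by (rule measure_Un_le) auto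
    finally show ?thesis .
  qed
  have "measure_pmf.prob q U \<le> (\<Sum>i\<in>{1..m}. measure_pmf.prob q (D i))"
    unfolding U_def by (rule measure_subadditive_finite) (auto simp: measure_pmf.emeasure_finite)
  also have "\<dots> \<le> (\<Sum>i\<in>{1..m}. exp (-a) * measure_pmf.prob (V (\<phi> i)) (D i))"
  proof (rule sum_mono)
    fix i assume i: "i \<in> {1..m}"
    show "measure_pmf.prob q (D i) \<le> exp (-a) * measure_pmf.prob (V (\<phi> i)) (D i)"
    proof (rule prob_le_scaled)
      fix y assume "y \<in> D i"
      hence "exp a * pmf q y < pmf (V (\<phi> i)) y" using sub[OF i] unfolding B_def by auto
      hence "exp (-a) * (exp a * pmf q y) \<le> exp (-a) * pmf (V (\<phi> i)) y" by simp
      thus "pmf q y \<le> exp (-a) * pmf (V (\<phi> i)) y" by (simp add: exp_minus field_simps)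
    qed simp
  qed
  also have "\<dots> \<le> (\<Sum>i\<in>{1..m}. exp (-a))"
    by (rule sum_mono) simp
  also have "\<dots> = real m * exp (-a)" by simp
  finally have qU: "measure_pmf.prob q U \<le> real m * exp (-a)" .
  have "1 - measure_pmf.expectation p bad = measure_pmf.expectation p (\<lambda>x. 1 - bad x)"
    unfolding bad_def by (subst Bochner_Integration.integral_diff) auto
  also have "\<dots> \<le> measure_pmf.expectation p (\<lambda>x. measure_pmf.prob (V x) (B x - U) + measure_pmf.prob (V x) U)"
    by (rule integral_mono) (use hB in \<open>auto simp: bad_def\<close>)
  also have "\<dots> = measure_pmf.expectation p (\<lambda>x. measure_pmf.prob (V x) (B x - U)) + measure_pmf.prob q U"
    unfolding q_def prob_bind_pmf by (subst Bochner_Integration.integral_add) auto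
  also have "\<dots> \<le> (1 - \<epsilon>) + real m * exp (-a)"
    by (rule add_mono[OF expectation_le_const qU]) (use lt in auto)
  finally have "\<epsilon> \<le> measure_pmf.expectation p bad + real m * exp (-a)" by simp
  moreover have "real m * exp (-a) < real M * exp (-a)" using mM by simp
  ultimately show False unfolding \<epsilon>_def bad_def by simp
qed


lemma feinstein:
  fixes p :: "'x pmf" and V :: "'x \<Rightarrow> 'y pmf" and a :: real and M :: nat
  defines "\<epsilon> \<equiv> measure_pmf.expectation p (\<lambda>x. measure_pmf.prob (V x) {y. pmf (V x) y \<le> exp a * pmf (bind_pmf p V) y}) + real M * exp (-a)"
  shows "\<exists>\<phi> D. \<phi> ` {1..M} \<subseteq> set_pmf p \<and> (\<forall>i\<in>{1..M}. \<forall>j\<in>{1..M}. i \<noteq> j \<longrightarrow> D i \<inter> D j = {})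
           \<and> (\<forall>i\<in>{1..M}. 1 - \<epsilon> \<le> measure_pmf.prob (V (\<phi> i)) (D i))"
proof -
  define B where "B = (\<lambda>x. {y. exp a * pmf (bind_pmf p V) y < pmf (V x) y})"
  have "m \<le> M \<longrightarrow> (\<exists>\<phi> D. \<phi> ` {1..m} \<subseteq> set_pmf p \<and> (\<forall>i\<in>{1..m}. D i \<subseteq> B (\<phi> i))
      \<and> (\<forall>i\<in>{1..m}. \<forall>j\<in>{1..m}. i \<noteq> j \<longrightarrow> D i \<inter> D j = {})
      \<and> (\<forall>i\<in>{1..m}. 1 - \<epsilon> \<le> measure_pmf.prob (V (\<phi> i)) (D i)))" for m
  proof (induction m)
    case 0
    show ?case by auto
  next
    case (Suc m)
    show ?case
    proof
      assume sm: "Suc m \<le> M"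
      then obtain \<phi> D where H: "\<phi> ` {1..m} \<subseteq> set_pmf p" "\<forall>i\<in>{1..m}. D i \<subseteq> B (\<phi> i)"
        "\<forall>i\<in>{1..m}. \<forall>j\<in>{1..m}. i \<noteq> j \<longrightarrow> D i \<inter> D j = {}"
        "\<forall>i\<in>{1..m}. 1 - \<epsilon> \<le> measure_pmf.prob (V (\<phi> i)) (D i)"
        using Suc.IH by auto
      obtain x where x: "x \<in> set_pmf p" "1 - \<epsilon> \<le> measure_pmf.prob (V x) (B x - (\<Union>i\<in>{1..m}. D i))"
        using feinstein_step[where m=m and M=M and D=D and \<phi>=\<phi> and p=p and V=V and a=a] H sm unfolding \<epsilon>_def B_def by auto
      define \<phi>' where "\<phi>' = \<phi>(Suc m := x)"
      define D' where "D' = D(Suc m := B x - (\<Union>i\<in>{1..m}. D i))"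
      have iv: "i \<in> {1..Suc m} \<longleftrightarrow> i \<in> {1..m} \<or> i = Suc m" for i by auto
      show "\<exists>\<phi> D. \<phi> ` {1..Suc m} \<subseteq> set_pmf p \<and> (\<forall>i\<in>{1..Suc m}. D i \<subseteq> B (\<phi> i))
        \<and> (\<forall>i\<in>{1..Suc m}. \<forall>j\<in>{1..Suc m}. i \<noteq> j \<longrightarrow> D i \<inter> D j = {})
        \<and> (\<forall>i\<in>{1..Suc m}. 1 - \<epsilon> \<le> measure_pmf.prob (V (\<phi> i)) (D i))"
      proof (intro exI conjI ballI impI)
        show "\<phi>' ` {1..Suc m} \<subseteq> set_pmf p" using H(1) x(1) unfolding \<phi>'_def iv by auto
      next
        fix i assume "i \<in> {1..Suc m}"
        thus "D' i \<subseteq> B (\<phi>' i)" using H(2) unfolding \<phi>'_def D'_def iv by auto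
      next
        fix i assume "i \<in> {1..Suc m}"
        thus "1 - \<epsilon> \<le> measure_pmf.prob (V (\<phi>' i)) (D' i)" using H(4) x(2) unfolding \<phi>'_def D'_def iv by auto
      next
        fix i j assume "i \<in> {1..Suc m}" "j \<in> {1..Suc m}" "i \<noteq> j"
        then consider "i \<in> {1..m}" "j \<in> {1..m}" | "i = Suc m" "j \<in> {1..m}" | "i \<in> {1..m}" "j = Suc m"
          unfolding iv by blast
        thus "D' i \<inter> D' j = {}"
        proof cases
          case 1
          thus ?thesis using H(3) \<open>i \<noteq> j\<close> unfolding D'_def by simp
        next
          case 2
          hence "D' j \<subseteq> (\<Union>i\<in>{1..m}. D i)" unfolding D'_def by auto
          moreover have "D' i = B x - (\<Union>i\<in>{1..m}. D i)" using 2 unfolding D'_def by simp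
          ultimately show ?thesis by blast
        next
          case 3
          hence "D' i \<subseteq> (\<Union>i\<in>{1..m}. D i)" unfolding D'_def by auto
          moreover have "D' j = B x - (\<Union>i\<in>{1..m}. D i)" using 3 unfolding D'_def by simp
          ultimately show ?thesis by blast
        qed
      qed
    qed
  qed
  from mp[OF this[of M] order_refl] obtain \<phi> D where
    "\<phi> ` {1..M} \<subseteq> set_pmf p" "\<forall>i\<in>{1..M}. \<forall>j\<in>{1..M}. i \<noteq> j \<longrightarrow> D i \<inter> D j = {}"
    "\<forall>i\<in>{1..M}. 1 - \<epsilon> \<le> measure_pmf.prob (V (\<phi> i)) (D i)"
    by (elim exE conjE) 
  thus ?thesis by (intro exI[of _ \<phi>] exI[of _ D] conjI)
qed


lemma converse_bound:
  fixes V :: "'x \<Rightarrow> 'y pmf" and Q :: "'y pmf" and N :: nat and c :: real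
  assumes N: "N \<ge> 1"
    and disj: "\<forall>i\<in>{1..N}. \<forall>j\<in>{1..N}. i \<noteq> j \<longrightarrow> D i \<inter> D j = {}"
  shows "(\<Sum>i=1..N. measure_pmf.prob (V (\<phi> i)) {y. pmf (V (\<phi> i)) y \<le> exp c * pmf Q y}) / real N
           \<le> err_prob V (N, \<phi>, D) + exp c / real N"
proof -
  define L where "L = (\<lambda>i. {y. pmf (V (\<phi> i)) y \<le> exp c * pmf Q y})"
  have one: "measure_pmf.prob (V (\<phi> i)) (L i) \<le> (1 - measure_pmf.prob (V (\<phi> i)) (D i)) + exp c * measure_pmf.prob Q (D i)" for i
  proof -
    have "measure_pmf.prob (V (\<phi> i)) (L i) \<le> measure_pmf.prob (V (\<phi> i)) (- D i \<union> (L i \<inter> D i))"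
      by (rule measure_pmf.finite_measure_mono) auto
    also have "\<dots> \<le> measure_pmf.prob (V (\<phi> i)) (- D i) + measure_pmf.prob (V (\<phi> i)) (L i \<inter> D i)"
      by (rule measure_Un_le) auto
    also have "measure_pmf.prob (V (\<phi> i)) (L i \<inter> D i) \<le> exp c * measure_pmf.prob Q (D i)"
    proof -
      have "measure_pmf.prob (V (\<phi> i)) (L i \<inter> D i) \<le> measure_pmf.prob (V (\<phi> i)) (L i \<inter> D i)" by simp
      have "measure_pmf.prob (V (\<phi> i)) (L i \<inter> D i) \<le> exp c * measure_pmf.prob Q (L i \<inter> D i)"
        by (rule prob_le_scaled) (auto simp: L_def)
      also have "\<dots> \<le> exp c * measure_pmf.prob Q (D i)"
        by (intro mult_left_mono measure_pmf.finite_measure_mono) auto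
      finally show ?thesis .
    qed
    finally show ?thesis by (simp add: prob_compl_pmf)
  qed
  have "(\<Sum>i=1..N. measure_pmf.prob (V (\<phi> i)) (L i))
       \<le> (\<Sum>i=1..N. (1 - measure_pmf.prob (V (\<phi> i)) (D i)) + exp c * measure_pmf.prob Q (D i))"
    by (rule sum_mono) (rule one)
  also have "\<dots> = (\<Sum>i=1..N. 1 - measure_pmf.prob (V (\<phi> i)) (D i)) + exp c * (\<Sum>i=1..N. measure_pmf.prob Q (D i))"
    by (simp add: sum.distrib sum_distrib_left)
  also have "(\<Sum>i=1..N. measure_pmf.prob Q (D i)) = measure_pmf.prob Q (\<Union>i\<in>{1..N}. D i)"
    by (rule measure_finite_Union[symmetric]) (use disj in \<open>auto simp: disjoint_family_on_def measure_pmf.emeasure_finite\<close>)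
  also have "\<dots> \<le> 1" by simp
  finally have "(\<Sum>i=1..N. measure_pmf.prob (V (\<phi> i)) (L i))
      \<le> (\<Sum>i=1..N. 1 - measure_pmf.prob (V (\<phi> i)) (D i)) + exp c" by simp
  hence "(\<Sum>i=1..N. measure_pmf.prob (V (\<phi> i)) (L i)) / real N
      \<le> ((\<Sum>i=1..N. 1 - measure_pmf.prob (V (\<phi> i)) (D i)) + exp c) / real N"
    using N by (intro divide_right_mono) auto
  thus ?thesis unfolding err_prob_def L_def by (simp add: add_divide_distrib)
qed


lemma dens_event_subset:
  assumes n: "n \<ge> 1" and y: "y \<in> dens_event \<beta> n t R1 Wx Q" and pos: "pmf Wx y > 0"
  shows "pmf Wx y \<le> exp (real n * R1 + t * real n powr \<beta>) * pmf Q y"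
proof -
  have b: "real n powr \<beta> > 0" using n by simp
  have q: "pmf Q y > 0" and lt: "(ln (pmf Wx y / pmf Q y) - real n * R1) / real n powr \<beta> < t"
    using y unfolding dens_event_def by auto
  have "ln (pmf Wx y / pmf Q y) - real n * R1 < t * real n powr \<beta>"
    using lt b by (simp add: divide_less_eq)
  hence "ln (pmf Wx y / pmf Q y) < real n * R1 + t * real n powr \<beta>" by simp
  hence "pmf Wx y / pmf Q y < exp (real n * R1 + t * real n powr \<beta>)"
  proof -
    have "pmf Wx y / pmf Q y > 0" using pos q by simp
    hence "exp (ln (pmf Wx y / pmf Q y)) = pmf Wx y / pmf Q y" by simp
    moreover have "exp (ln (pmf Wx y / pmf Q y)) < exp (real n * R1 + t * real n powr \<beta>)"
      using \<open>ln (pmf Wx y / pmf Q y) < real n * R1 + t * real n powr \<beta>\<close> by simp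
    ultimately show ?thesis by simp
  qed
  thus ?thesis using q by (simp add: divide_less_eq less_imp_le)
qed

lemma converse_n:
  fixes V :: "'x \<Rightarrow> 'y pmf" and Q :: "'y pmf" and N :: nat
  assumes n: "n \<ge> 1" and code: "is_code_in S (N, \<phi>, D)"
  shows "measure_pmf.expectation (map_pmf \<phi> (pmf_of_set {1..N}))
           (\<lambda>x. measure_pmf.prob (V x) (dens_event \<beta> n t R1 (V x) Q))
         \<le> err_prob V (N, \<phi>, D) + exp (real n * R1 + t * real n powr \<beta>) / real N"
proof -
  define c where "c = real n * R1 + t * real n powr \<beta>"
  have N: "N \<ge> 1" and disj: "\<forall>i\<in>{1..N}. \<forall>j\<in>{1..N}. i \<noteq> j \<longrightarrow> D i \<inter> D j = {}"
    using code unfolding is_code_in_def by auto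
  have ne: "{1..N} \<noteq> {}" using N by simp
  have "measure_pmf.expectation (map_pmf \<phi> (pmf_of_set {1..N}))
           (\<lambda>x. measure_pmf.prob (V x) (dens_event \<beta> n t R1 (V x) Q))
      = (\<Sum>i=1..N. measure_pmf.prob (V (\<phi> i)) (dens_event \<beta> n t R1 (V (\<phi> i)) Q)) / real N"
    using ne by (simp add: integral_pmf_of_set)
  also have "\<dots> \<le> (\<Sum>i=1..N. measure_pmf.prob (V (\<phi> i)) {y. pmf (V (\<phi> i)) y \<le> exp c * pmf Q y}) / real N"
  proof (intro divide_right_mono sum_mono)
    fix i
    show "measure_pmf.prob (V (\<phi> i)) (dens_event \<beta> n t R1 (V (\<phi> i)) Q)
        \<le> measure_pmf.prob (V (\<phi> i)) {y. pmf (V (\<phi> i)) y \<le> exp c * pmf Q y}"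
    proof (rule prob_mono_set_pmf, safe)
      fix y assume "y \<in> dens_event \<beta> n t R1 (V (\<phi> i)) Q" "y \<in> set_pmf (V (\<phi> i))"
      thus "pmf (V (\<phi> i)) y \<le> exp c * pmf Q y"
        using dens_event_subset[OF n, of y \<beta> t R1 "V (\<phi> i)" Q] unfolding c_def
        by (simp add: pmf_positive)
    qed
  qed simp
  also have "\<dots> \<le> err_prob V (N, \<phi>, D) + exp c / real N"
    by (rule converse_bound[OF N disj])
  finally show ?thesis unfolding c_def .
qed


lemma nat_floor_ge_half:
  assumes "x \<ge> (1::real)"
  shows "real (nat \<lfloor>x\<rfloor>) \<ge> x / 2"
proof (cases "x < 2")
  case True
  hence "\<lfloor>x\<rfloor> = 1" using assms by linarith
  thus ?thesis using True by simp
next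
  case False
  have "real_of_int \<lfloor>x\<rfloor> > x - 1" by linarith
  moreover have "real (nat \<lfloor>x\<rfloor>) = real_of_int \<lfloor>x\<rfloor>" using assms by simp
  ultimately show ?thesis using False by linarith
qed

lemma achiev_n:
  fixes p :: "'x pmf" and V :: "'x \<Rightarrow> 'y pmf" and n :: nat and r s :: real
  assumes n: "n \<ge> 1" and rs: "r < s" and sub: "set_pmf p \<subseteq> S"
  shows "\<exists>\<Phi>. is_code_in S \<Phi> \<and>
     r - 1 / real n powr \<beta> \<le> (ln (real (code_size \<Phi>)) - real n * R1) / real n powr \<beta> \<and>
     err_prob V \<Phi> \<le> measure_pmf.expectation p (\<lambda>x. measure_pmf.prob (V x) (dens_event \<beta> n s R1 (V x) (bind_pmf p V)))
        + exp (- ((s - r) * real n powr \<beta> / 2))"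
proof -
  define b where "b = real n powr \<beta>"
  have b: "b > 0" using n unfolding b_def by simp
  define E where "E = real n * R1 + r * b"
  define F where "F = measure_pmf.expectation p (\<lambda>x. measure_pmf.prob (V x) (dens_event \<beta> n s R1 (V x) (bind_pmf p V)))"
  have F0: "F \<ge> 0" unfolding F_def by (rule integral_nonneg_AE) auto
  show ?thesis
  proof (cases "E < 0")
    case True
    obtain x0 where x0: "x0 \<in> set_pmf p" using set_pmf_not_empty[of p] by blast
    define \<Phi> where "\<Phi> = (1::nat, (\<lambda>_::nat. x0), (\<lambda>_::nat. UNIV :: 'y set))"
    show ?thesis unfolding b_def[symmetric] F_def[symmetric]
    proof (intro exI[of _ \<Phi>] conjI)
      show "is_code_in S \<Phi>" using x0 sub unfolding \<Phi>_def is_code_in_def by auto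
      have "- (real n * R1) > r * b" using True unfolding E_def by simp
      hence "(- (real n * R1) - r * b) / b > 0" using b by (intro divide_pos_pos) auto
      moreover have "(- (real n * R1) - r * b) / b = (- (real n * R1)) / b - r" using b by (simp add: diff_divide_distrib)
      ultimately have "r \<le> (- (real n * R1)) / b" by linarith
      moreover have "1 / b > 0" using b by simp
      ultimately have "(- (real n * R1)) / b \<ge> r - 1 / b" by linarith
      thus "r - 1 / b \<le> (ln (real (code_size \<Phi>)) - real n * R1) / b"
        unfolding \<Phi>_def code_size_def by simp
      have "err_prob V \<Phi> = 0" unfolding \<Phi>_def err_prob_def by simp
      thus "err_prob V \<Phi> \<le> F + exp (- ((s - r) * b / 2))" using F0
        by (simp add: add_nonneg_nonneg)
    qed
  next
    case False
    define M where "M = nat \<lfloor>exp E\<rfloor>"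
    have eE: "exp E \<ge> 1" using False by simp
    have M1: "M \<ge> 1" using eE unfolding M_def by linarith
    have Mle: "real M \<le> exp E" unfolding M_def using eE by linarith
    have Mge: "real M \<ge> exp E / 2" unfolding M_def by (rule nat_floor_ge_half[OF eE])
    define a where "a = E + (s - r) * b / 2"
    define \<epsilon> where "\<epsilon> = measure_pmf.expectation p (\<lambda>x. measure_pmf.prob (V x) {y. pmf (V x) y \<le> exp a * pmf (bind_pmf p V) y}) + real M * exp (-a)"
    obtain \<phi> D where fe: "\<phi> ` {1..M} \<subseteq> set_pmf p" "\<forall>i\<in>{1..M}. \<forall>j\<in>{1..M}. i \<noteq> j \<longrightarrow> D i \<inter> D j = {}"
      "\<forall>i\<in>{1..M}. 1 - \<epsilon> \<le> measure_pmf.prob (V (\<phi> i)) (D i)"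
      using feinstein[where p=p and V=V and a=a and M=M] unfolding \<epsilon>_def by blast
    define \<Phi> where "\<Phi> = (M, \<phi>, D)"
    have eps_le: "\<epsilon> \<le> F + exp (- ((s - r) * b / 2))"
    proof -
      have "measure_pmf.expectation p (\<lambda>x. measure_pmf.prob (V x) {y. pmf (V x) y \<le> exp a * pmf (bind_pmf p V) y}) \<le> F"
        unfolding F_def
      proof (rule integral_mono_AE)
        show "AE x in measure_pmf p. measure_pmf.prob (V x) {y. pmf (V x) y \<le> exp a * pmf (bind_pmf p V) y}
             \<le> measure_pmf.prob (V x) (dens_event \<beta> n s R1 (V x) (bind_pmf p V))"
        proof (unfold AE_measure_pmf_iff, intro ballI prob_mono_set_pmf subsetI)
          fix x y assume x: "x \<in> set_pmf p" and y: "y \<in> {y. pmf (V x) y \<le> exp a * pmf (bind_pmf p V) y} \<inter> set_pmf (V x)"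
          have py: "pmf (V x) y > 0" using y by (simp add: pmf_positive)
          have yq: "y \<in> set_pmf (bind_pmf p V)" using x y by auto
          hence qy: "pmf (bind_pmf p V) y > 0" by (simp add: pmf_positive)
          have "pmf (V x) y / pmf (bind_pmf p V) y \<le> exp a" using y qy by (simp add: divide_le_eq)
          hence "ln (pmf (V x) y / pmf (bind_pmf p V) y) \<le> ln (exp a)" using py qy
            by (subst ln_le_cancel_iff) auto
          hence "ln (pmf (V x) y / pmf (bind_pmf p V) y) \<le> a" by simp
          hence "ln (pmf (V x) y / pmf (bind_pmf p V) y) - real n * R1 < s * b"
          proof -
            have "a = real n * R1 + (r * b + s * b) / 2" unfolding a_def E_def by (simp add: field_simps)
            moreover have "r * b < s * b" using rs b by simp
            ultimately have "a < real n * R1 + s * b" by (simp add: field_simps)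
            thus ?thesis using \<open>ln (pmf (V x) y / pmf (bind_pmf p V) y) \<le> a\<close> by linarith
          qed
          thus "y \<in> dens_event \<beta> n s R1 (V x) (bind_pmf p V)"
            unfolding dens_event_def b_def[symmetric] using qy b by (simp add: divide_less_eq)
        qed
      qed auto
      moreover have "real M * exp (-a) \<le> exp (- ((s - r) * b / 2))"
      proof -
        have "real M * exp (-a) \<le> exp E * exp (-a)" using Mle by (simp add: mult_right_mono)
        also have "\<dots> = exp (- ((s - r) * b / 2))" unfolding a_def by (simp add: exp_add[symmetric])
        finally show ?thesis .
      qed
      ultimately show ?thesis unfolding \<epsilon>_def by simp
    qed
    show ?thesis unfolding b_def[symmetric] F_def[symmetric]
    proof (intro exI[of _ \<Phi>] conjI)
      show "is_code_in S \<Phi>" using fe(1,2) sub M1 unfolding \<Phi>_def is_code_in_def by auto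
      have "ln (real M) \<ge> ln (exp E / 2)" using Mge eE by (intro ln_mono) auto
      also have "ln (exp E / 2) = E - ln 2" by (simp add: ln_div)
      finally have "ln (real M) \<ge> E - 1" using ln_2_less_1 by linarith
      hence "ln (real M) - real n * R1 \<ge> r * b - 1" unfolding E_def by simp
      hence "(ln (real M) - real n * R1) / b \<ge> (r * b - 1) / b" using b by (intro divide_right_mono) auto
      also have "(r * b - 1) / b = r - 1 / b" using b by (simp add: field_simps)
      finally show "r - 1 / b \<le> (ln (real (code_size \<Phi>)) - real n * R1) / b"
        unfolding \<Phi>_def code_size_def by simp
      have "err_prob V \<Phi> = (\<Sum>i=1..M. 1 - measure_pmf.prob (V (\<phi> i)) (D i)) / real M"
        unfolding \<Phi>_def err_prob_def by simp
      also have "\<dots> \<le> (\<Sum>i=1..M. \<epsilon>) / real M"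
      proof (intro divide_right_mono sum_mono)
        fix i assume "i \<in> {1..M}"
        thus "1 - measure_pmf.prob (V (\<phi> i)) (D i) \<le> \<epsilon>" using fe(3) by force
      qed simp
      also have "\<dots> = \<epsilon>" using M1 by simp
      finally show "err_prob V \<Phi> \<le> F + exp (- ((s - r) * b / 2))" using eps_le by simp
    qed
  qed
qed



lemma powr_seq_at_top:
  assumes "(0::real) < \<beta>"
  shows "filterlim (\<lambda>n::nat. real n powr \<beta>) at_top sequentially"
  by (rule filterlim_compose[OF real_powr_at_top[OF assms] filterlim_real_sequentially])

lemma exp_neg_tendsto0:
  fixes x :: "'a \<Rightarrow> real"
  assumes "filterlim x at_top F"
  shows "((\<lambda>n. exp (- x n)) \<longlongrightarrow> 0) F"
proof -
  have "filterlim (\<lambda>n. - x n) at_bot F" using assms by (rule filterlim_uminus_at_top[THEN iffD1])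
  thus ?thesis by (rule filterlim_compose[OF exp_at_bot])
qed

lemma Jp_mono:
  assumes "t \<le> t'"
  shows "Jp \<beta> W P Q t R1 \<le> Jp \<beta> W P Q t' R1"
  unfolding Jp_def
proof (intro Limsup_mono always_eventually allI ereal_less_eq(3)[THEN iffD2] integral_mono)
  fix n
  show "\<And>x. measure_pmf.prob (W n x) (dens_event \<beta> n t R1 (W n x) (Q n))
           \<le> measure_pmf.prob (W n x) (dens_event \<beta> n t' R1 (W n x) (Q n))"
    by (rule measure_pmf.finite_measure_mono) (use assms in \<open>auto simp: dens_event_def\<close>)
qed auto

lemma Lim_antitone:
  fixes g :: "real \<Rightarrow> ereal"
  assumes mono: "\<And>x y. 0 < x \<Longrightarrow> x \<le> y \<Longrightarrow> g y \<le> g x"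
  shows "Lim (at_right 0) g = (SUP x\<in>{0<..}. g x)"
proof (rule tendsto_Lim[OF trivial_limit_at_right_real])
  show "(g \<longlongrightarrow> (SUP x\<in>{0<..}. g x)) (at_right 0)"
  proof (rule order_tendstoI)
    fix a assume "a < (SUP x\<in>{0<..}. g x)"
    then obtain x0 where x0: "x0 > 0" "a < g x0" by (auto simp: less_SUP_iff)
    have "\<forall>\<^sub>F x in at_right 0. x \<in> {0<..<x0}" using eventually_at_right_real[OF x0(1)] .
    thus "\<forall>\<^sub>F x in at_right 0. a < g x"
    proof eventually_elim
      case (elim x)
      hence "g x0 \<le> g x" using mono[of x x0] by auto
      thus ?case using x0(2) by (rule less_le_trans[rotated])
    qed
  next
    fix a assume a: "(SUP x\<in>{0<..}. g x) < a"
    show "\<forall>\<^sub>F x in at_right 0. g x < a"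
      using eventually_at_right_less[of 0]
    proof eventually_elim
      case (elim x)
      hence "g x \<le> (SUP x\<in>{0<..}. g x)" by (intro SUP_upper) auto
      thus ?case using a by (rule le_less_trans)
    qed
  qed
qed


lemma limsup_le_add_vanish:
  fixes a u v :: "nat \<Rightarrow> real"
  assumes v: "v \<longlonglongrightarrow> 0" and ev: "\<forall>\<^sub>F n in sequentially. a n \<le> u n + v n"
  shows "limsup (\<lambda>n. ereal (a n)) \<le> limsup (\<lambda>n. ereal (u n))"
proof -
  have "limsup (\<lambda>n. ereal (a n)) \<le> limsup (\<lambda>n. ereal (u n) + ereal (v n))"
    by (rule Limsup_mono) (rule eventually_mono[OF ev], simp)
  also have "\<dots> \<le> limsup (\<lambda>n. ereal (u n)) + limsup (\<lambda>n. ereal (v n))"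
    by (rule ereal_limsup_add_mono)
  also have "limsup (\<lambda>n. ereal (v n)) = 0"
    using lim_imp_Limsup[OF trivial_limit_sequentially, of "\<lambda>n. ereal (v n)" 0] v
    by (simp add: zero_ereal_def tendsto_ereal)
  finally show ?thesis by simp
qed

definition code_pmf :: "(nat \<Rightarrow> ('x, 'y) code) \<Rightarrow> nat \<Rightarrow> 'x pmf" where
  "code_pmf \<Phi> n = map_pmf (fst (snd (\<Phi> n))) (pmf_of_set {1..fst (\<Phi> n)})"

lemma code_pmf_Pck:
  assumes "\<Phi> \<in> admissible_codes X c K"
  shows "code_pmf \<Phi> \<in> Pck X c K"
  unfolding Pck_def
proof (intro CollectI allI)
  fix n
  obtain N \<phi> D where e: "\<Phi> n = (N, \<phi>, D)" by (cases "\<Phi> n") auto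
  have "is_code_in (Xnck X c K n) (\<Phi> n)" using assms unfolding admissible_codes_def by simp
  hence "is_code_in (Xnck X c K n) (N, \<phi>, D)" using e by simp
  hence "N \<ge> 1" "\<phi> ` {1..N} \<subseteq> Xnck X c K n" unfolding is_code_in_def by auto
  thus "set_pmf (code_pmf \<Phi> n) \<subseteq> Xnck X c K n" unfolding code_pmf_def e by simp
qed

lemma converse_asym:
  fixes W :: "nat \<Rightarrow> 'x \<Rightarrow> 'y pmf" and Q :: "nat \<Rightarrow> 'y pmf"
  assumes \<beta>: "0 < \<beta>" and adm: "\<Phi> \<in> admissible_codes X c K"
    and rate: "ereal R \<le> code_rate \<beta> R1 \<Phi>" and \<delta>: "0 < \<delta>"
  shows "Jp \<beta> W (code_pmf \<Phi>) Q (R - \<delta>) R1 \<le> code_err W \<Phi>"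
proof -
  define b where "b = (\<lambda>n::nat. real n powr \<beta>)"
  have blim: "filterlim b at_top sequentially" unfolding b_def by (rule powr_seq_at_top[OF \<beta>])
  have ev1: "\<forall>\<^sub>F n in sequentially. ereal (R - \<delta>/2) < ereal ((ln (real (code_size (\<Phi> n))) - real n * R1) / b n)"
    unfolding b_def
  proof (rule less_LiminfD)
    have "ereal (R - \<delta>/2) < ereal R" using \<delta> by simp
    thus "ereal (R - \<delta>/2) < liminf (\<lambda>n. ereal ((ln (real (code_size (\<Phi> n))) - real n * R1) / real n powr \<beta>))"
      using rate unfolding code_rate_def by (rule less_le_trans)
  qed
  have ev: "\<forall>\<^sub>F n in sequentially. 
     measure_pmf.expectation (code_pmf \<Phi> n) (\<lambda>x. measure_pmf.prob (W n x) (dens_event \<beta> n (R - \<delta>) R1 (W n x) (Q n)))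
     \<le> err_prob (W n) (\<Phi> n) + exp (- (\<delta> / 2 * b n))"
    using ev1 eventually_ge_at_top[of 1]
  proof eventually_elim
    case (elim n)
    obtain N \<phi> D where e: "\<Phi> n = (N, \<phi>, D)" by (cases "\<Phi> n") auto
    have "is_code_in (Xnck X c K n) (\<Phi> n)" using adm unfolding admissible_codes_def by simp
    hence code: "is_code_in (Xnck X c K n) (N, \<phi>, D)" using e by simp
    hence N1: "N \<ge> 1" unfolding is_code_in_def by auto
    have bpos: "b n > 0" using elim(2) unfolding b_def by simp
    have lt: "R - \<delta>/2 < (ln (real N) - real n * R1) / b n" using elim(1) e by (simp add: code_size_def)
    hence lt2: "(R - \<delta>/2) * b n < ln (real N) - real n * R1" using bpos by (simp add: pos_less_divide_eq)
    have "measure_pmf.expectation (code_pmf \<Phi> n) (\<lambda>x. measure_pmf.prob (W n x) (dens_event \<beta> n (R - \<delta>) R1 (W n x) (Q n)))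
       \<le> err_prob (W n) (N, \<phi>, D) + exp (real n * R1 + (R - \<delta>) * b n) / real N"
    proof -
      have cp: "code_pmf \<Phi> n = map_pmf \<phi> (pmf_of_set {1..N})" unfolding code_pmf_def e by simp
      show ?thesis
        using converse_n[OF elim(2) code, where V="W n" and \<beta>=\<beta> and t="R - \<delta>" and ?R1.0=R1 and Q="Q n"]
        unfolding cp b_def .
    qed
    also have "exp (real n * R1 + (R - \<delta>) * b n) / real N = exp (real n * R1 + (R - \<delta>) * b n - ln (real N))"
      using N1 by (simp add: exp_diff)
    also have "\<dots> \<le> exp (- (\<delta> / 2 * b n))"
      using lt2 by (simp add: algebra_simps)
    finally show ?case using e by simp
  qed
  have "Jp \<beta> W (code_pmf \<Phi>) Q (R - \<delta>) R1 \<le> limsup (\<lambda>n. ereal (err_prob (W n) (\<Phi> n)))"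
    unfolding Jp_def
  proof (rule limsup_le_add_vanish[OF _ ev])
    have "filterlim (\<lambda>n. \<delta> / 2 * b n) at_top sequentially"
      using \<delta> by (intro filterlim_tendsto_pos_mult_at_top[OF tendsto_const _ blim]) auto
    thus "(\<lambda>n. exp (- (\<delta> / 2 * b n))) \<longlonglongrightarrow> 0" by (rule exp_neg_tendsto0)
  qed
  thus ?thesis unfolding code_err_def .
qed


lemma achiev_asym:
  fixes W :: "nat \<Rightarrow> 'x \<Rightarrow> 'y pmf" and r s :: "nat \<Rightarrow> real"
  assumes \<beta>: "0 < \<beta>" and P: "P \<in> Pck X c K" and rs: "\<And>n. r n < s n"
    and gap: "filterlim (\<lambda>n. (s n - r n) * real n powr \<beta>) at_top sequentially"
    and rlim: "r \<longlonglongrightarrow> R"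
  shows "\<exists>\<Phi>\<in>admissible_codes X c K. ereal R \<le> code_rate \<beta> R1 \<Phi> \<and>
     code_err W \<Phi> \<le> limsup (\<lambda>n. ereal (measure_pmf.expectation (P n)
        (\<lambda>x. measure_pmf.prob (W n x) (dens_event \<beta> n (s n) R1 (W n x) (out_dist W P n)))))"
proof -
  define F where "F = (\<lambda>n. measure_pmf.expectation (P n)
        (\<lambda>x. measure_pmf.prob (W n x) (dens_event \<beta> n (s n) R1 (W n x) (out_dist W P n))))"
  define b where "b = (\<lambda>n::nat. real n powr \<beta>)"
  have sub: "set_pmf (P n) \<subseteq> Xnck X c K n" for n using P unfolding Pck_def by auto
  have "\<forall>n. \<exists>\<Psi>. is_code_in (Xnck X c K n) \<Psi> \<and> (n \<ge> 1 \<longrightarrow>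
      r n - 1 / b n \<le> (ln (real (code_size \<Psi>)) - real n * R1) / b n \<and>
      err_prob (W n) \<Psi> \<le> F n + exp (- ((s n - r n) * b n / 2)))"
  proof
    fix n
    show "\<exists>\<Psi>. is_code_in (Xnck X c K n) \<Psi> \<and> (n \<ge> 1 \<longrightarrow>
      r n - 1 / b n \<le> (ln (real (code_size \<Psi>)) - real n * R1) / b n \<and>
      err_prob (W n) \<Psi> \<le> F n + exp (- ((s n - r n) * b n / 2)))"
    proof (cases "n \<ge> 1")
      case True
      from achiev_n[OF True rs sub, where V="W n" and \<beta>=\<beta> and ?R1.0=R1]
      show ?thesis unfolding F_def b_def out_dist_def using True by blast
    next
      case False
      obtain x0 where x0: "x0 \<in> set_pmf (P n)" using set_pmf_not_empty[of "P n"] by blast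
      have "is_code_in (Xnck X c K n) (1::nat, (\<lambda>_::nat. x0), (\<lambda>_::nat. UNIV :: 'y set))"
        using x0 sub unfolding is_code_in_def by auto
      thus ?thesis using False by blast
    qed
  qed
  then obtain \<Phi> where \<Phi>: "\<And>n. is_code_in (Xnck X c K n) (\<Phi> n)"
    "\<And>n. n \<ge> 1 \<Longrightarrow> r n - 1 / b n \<le> (ln (real (code_size (\<Phi> n))) - real n * R1) / b n"
    "\<And>n. n \<ge> 1 \<Longrightarrow> err_prob (W n) (\<Phi> n) \<le> F n + exp (- ((s n - r n) * b n / 2))"
    by metis
  have blim: "filterlim b at_top sequentially" unfolding b_def by (rule powr_seq_at_top[OF \<beta>])
  show ?thesis
  proof (intro bexI conjI)
    show "\<Phi> \<in> admissible_codes X c K" using \<Phi>(1) unfolding admissible_codes_def by simp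
  next
    have lim: "(\<lambda>n. r n - inverse (b n)) \<longlonglongrightarrow> R - 0"
      by (intro tendsto_diff rlim tendsto_inverse_0_at_top blim)
    have "ereal R = liminf (\<lambda>n. ereal (r n - inverse (b n)))"
      using lim_imp_Liminf[OF trivial_limit_sequentially, of "\<lambda>n. ereal (r n - inverse (b n))" "ereal R"] lim
      by (simp add: tendsto_ereal)
    also have "\<dots> \<le> code_rate \<beta> R1 \<Phi>"
      unfolding code_rate_def
    proof (rule Liminf_mono)
      show "\<forall>\<^sub>F n in sequentially. ereal (r n - inverse (b n)) \<le> ereal ((ln (real (code_size (\<Phi> n))) - real n * R1) / real n powr \<beta>)"
        using eventually_ge_at_top[of 1]
      proof eventually_elim
        case (elim n)
        thus ?case using \<Phi>(2)[OF elim] by (simp add: inverse_eq_divide b_def)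
      qed
    qed
    finally show "ereal R \<le> code_rate \<beta> R1 \<Phi>" .
  next
    have g2: "filterlim (\<lambda>n. (s n - r n) * b n / 2) at_top sequentially"
    proof -
      have "filterlim (\<lambda>n. 1/2 * ((s n - r n) * b n)) at_top sequentially"
      proof (rule filterlim_tendsto_pos_mult_at_top[OF tendsto_const])
        show "filterlim (\<lambda>n. (s n - r n) * b n) at_top sequentially" using gap unfolding b_def .
      qed simp
      thus ?thesis by simp
    qed
    have "code_err W \<Phi> \<le> limsup (\<lambda>n. ereal (F n))"
      unfolding code_err_def
    proof (rule limsup_le_add_vanish)
      show "(\<lambda>n. exp (- ((s n - r n) * b n / 2))) \<longlonglongrightarrow> 0" by (rule exp_neg_tendsto0[OF g2])
      show "\<forall>\<^sub>F n in sequentially. err_prob (W n) (\<Phi> n) \<le> F n + exp (- ((s n - r n) * b n / 2))"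
        using eventually_ge_at_top[of 1] by eventually_elim (rule \<Phi>(3))
    qed
    thus "code_err W \<Phi> \<le> limsup (\<lambda>n. ereal (measure_pmf.expectation (P n)
        (\<lambda>x. measure_pmf.prob (W n x) (dens_event \<beta> n (s n) R1 (W n x) (out_dist W P n)))))"
      unfolding F_def .
  qed
qed



lemma fexp_mono:
  assumes "t \<le> t'"
  shows "measure_pmf.expectation p (\<lambda>x. measure_pmf.prob (V x) (dens_event \<beta> n t R1 (V x) q))
       \<le> measure_pmf.expectation p (\<lambda>x. measure_pmf.prob (V x) (dens_event \<beta> n t' R1 (V x) q))"
proof (rule integral_mono)
  fix x
  show "measure_pmf.prob (V x) (dens_event \<beta> n t R1 (V x) q) \<le> measure_pmf.prob (V x) (dens_event \<beta> n t' R1 (V x) q)"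
    by (rule measure_pmf.finite_measure_mono) (use assms in \<open>auto simp: dens_event_def\<close>)
qed auto

lemma diag_index:
  fixes N :: "nat \<Rightarrow> nat"
  shows "\<exists>\<kappa>::nat \<Rightarrow> nat. filterlim \<kappa> at_top sequentially \<and> (\<forall>n\<ge>N 0. N (\<kappa> n) \<le> n)"
proof -
  define T where "T = (\<lambda>n. {k. k \<le> n \<and> (\<forall>j\<le>k. N j \<le> n)})"
  define \<kappa> where "\<kappa> = (\<lambda>n. Max (T n))"
  have fin: "finite (T n)" for n unfolding T_def by auto
  have mem: "m \<in> T n \<Longrightarrow> m \<le> \<kappa> n" for m n unfolding \<kappa>_def using fin by simp
  show ?thesis
  proof (intro exI conjI allI impI)
    fix n assume "N 0 \<le> n"
    hence "0 \<in> T n" unfolding T_def by simp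
    hence "\<kappa> n \<in> T n" unfolding \<kappa>_def using fin by (intro Max_in) auto
    thus "N (\<kappa> n) \<le> n" unfolding T_def by simp
  next
    show "filterlim \<kappa> at_top sequentially"
      unfolding filterlim_at_top
    proof
      fix m
      show "\<forall>\<^sub>F n in sequentially. m \<le> \<kappa> n"
        using eventually_ge_at_top[of "max m (Max (N ` {..m}))"]
      proof eventually_elim
        case (elim n)
        have "m \<in> T n" unfolding T_def
        proof (intro CollectI conjI allI impI)
          show "m \<le> n" using elim by simp
        next
          fix j assume "j \<le> m"
          hence "N j \<le> Max (N ` {..m})" by (intro Max_ge) auto
          moreover have "Max (N ` {..m}) \<le> n" using elim by simp
          ultimately show "N j \<le> n" by linarith
        qed
        thus ?case by (rule mem)
      qed
    qed
  qed
qed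


lemma achiev_diag:
  fixes W :: "nat \<Rightarrow> 'x \<Rightarrow> 'y pmf"
  assumes \<beta>: "0 < \<beta>" and P: "P \<in> Pck X c K"
    and L: "(SUP \<gamma>\<in>{0<..}. Ip \<beta> W P (R2 - \<gamma>) R1) < ereal e"
  shows "\<exists>\<Phi>\<in>admissible_codes X c K. ereal R2 \<le> code_rate \<beta> R1 \<Phi> \<and> code_err W \<Phi> \<le> ereal e"
proof -
  define f where "f = (\<lambda>n t. measure_pmf.expectation (P n)
        (\<lambda>x. measure_pmf.prob (W n x) (dens_event \<beta> n t R1 (W n x) (out_dist W P n))))"
  have IpF: "Ip \<beta> W P t R1 = limsup (\<lambda>n. ereal (f n t))" for t
    unfolding Ip_def Jp_def f_def ..
  have "\<forall>k. \<exists>N. \<forall>n\<ge>N. f n (R2 - inverse (real (Suc k))) < e"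
  proof
    fix k
    have "Ip \<beta> W P (R2 - inverse (real (Suc k))) R1 \<le> (SUP \<gamma>\<in>{0<..}. Ip \<beta> W P (R2 - \<gamma>) R1)"
      by (rule SUP_upper) simp
    hence "limsup (\<lambda>n. ereal (f n (R2 - inverse (real (Suc k))))) < ereal e"
      using L unfolding IpF by (rule le_less_trans)
    hence "\<forall>\<^sub>F n in sequentially. ereal (f n (R2 - inverse (real (Suc k)))) < ereal e"
      by (rule Limsup_lessD)
    thus "\<exists>N. \<forall>n\<ge>N. f n (R2 - inverse (real (Suc k))) < e"
      unfolding eventually_sequentially by simp
  qed
  then obtain N where N: "\<And>k n. N k \<le> n \<Longrightarrow> f n (R2 - inverse (real (Suc k))) < e"
    by metis
  obtain \<kappa> where \<kappa>: "filterlim \<kappa> at_top sequentially" "\<And>n. N 0 \<le> n \<Longrightarrow> N (\<kappa> n) \<le> n"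
    using diag_index[of N] by blast
  define \<gamma> where "\<gamma> = (\<lambda>n. max (inverse (real (Suc (\<kappa> n)))) (inverse (real n powr (\<beta>/2))))"
  have \<gamma>pos: "\<gamma> n > 0" for n unfolding \<gamma>_def by (simp add: less_max_iff_disj)
  have \<gamma>ge: "inverse (real (Suc (\<kappa> n))) \<le> \<gamma> n" for n unfolding \<gamma>_def by simp
  have \<gamma>lim: "\<gamma> \<longlonglongrightarrow> 0"
  proof -
    have a: "(\<lambda>n. inverse (real (Suc (\<kappa> n)))) \<longlonglongrightarrow> 0"
      by (rule filterlim_compose[OF LIMSEQ_inverse_real_of_nat \<kappa>(1)])
    have b: "(\<lambda>n. inverse (real n powr (\<beta>/2))) \<longlonglongrightarrow> 0"
      by (rule tendsto_inverse_0_at_top[OF powr_seq_at_top]) (use \<beta> in simp)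
    show ?thesis using tendsto_max[OF a b] unfolding \<gamma>_def by simp
  qed
  define r where "r = (\<lambda>n. R2 - 2 * \<gamma> n)"
  define s where "s = (\<lambda>n. R2 - \<gamma> n)"
  have rs: "r n < s n" for n unfolding r_def s_def using \<gamma>pos[of n] by simp
  have gap: "filterlim (\<lambda>n. (s n - r n) * real n powr \<beta>) at_top sequentially"
  proof (rule filterlim_at_top_mono[OF powr_seq_at_top[of "\<beta>/2"]])
    show "0 < \<beta>/2" using \<beta> by simp
    show "\<forall>\<^sub>F n in sequentially. real n powr (\<beta> / 2) \<le> (s n - r n) * real n powr \<beta>"
      using eventually_ge_at_top[of 1]
    proof eventually_elim
      case (elim n)
      define a where "a = real n powr (\<beta>/2)"
      have apos: "a > 0" using elim unfolding a_def by simp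
      have "real n powr \<beta> = a * a" unfolding a_def by (simp add: powr_add[symmetric])
      hence "(s n - r n) * real n powr \<beta> = \<gamma> n * (a * a)" unfolding s_def r_def by simp
      also have "\<dots> \<ge> inverse a * (a * a)"
        using apos by (intro mult_right_mono) (auto simp: \<gamma>_def a_def)
      also have "inverse a * (a * a) = a" using apos by (simp add: field_simps)
      finally show ?case unfolding a_def .
    qed
  qed
  have rlim: "r \<longlonglongrightarrow> R2"
    using tendsto_diff[OF tendsto_const[of R2] tendsto_mult[OF tendsto_const[of 2] \<gamma>lim]]
    unfolding r_def by simp
  obtain \<Phi> where \<Phi>: "\<Phi> \<in> admissible_codes X c K" "ereal R2 \<le> code_rate \<beta> R1 \<Phi>"
    "code_err W \<Phi> \<le> limsup (\<lambda>n. ereal (f n (s n)))"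
    using achiev_asym[OF \<beta> P rs gap rlim, where W=W and ?R1.0=R1] unfolding f_def by blast
  have "limsup (\<lambda>n. ereal (f n (s n))) \<le> ereal e"
  proof (rule Limsup_bounded)
    show "\<forall>\<^sub>F n in sequentially. ereal (f n (s n)) \<le> ereal e"
      using eventually_ge_at_top[of "N 0"]
    proof eventually_elim
      case (elim n)
      have "f n (s n) \<le> f n (R2 - inverse (real (Suc (\<kappa> n))))"
        unfolding f_def s_def by (rule fexp_mono) (use \<gamma>ge[of n] in simp)
      also have "\<dots> < e" by (rule N[OF \<kappa>(2)[OF elim]])
      finally show ?case by simp
    qed
  qed
  thus ?thesis using \<Phi> by (intro bexI[of _ \<Phi>] conjI) (auto intro: order_trans)
qed



lemma Lim_Jp_eq:
  "Lim (at_right (0::real)) (\<lambda>\<gamma>. Jp \<beta> W P Q (R2 - \<gamma>) R1) = (SUP \<gamma>\<in>{0<..}. Jp \<beta> W P Q (R2 - \<gamma>) R1)"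
  by (rule Lim_antitone) (rule Jp_mono, simp)

lemma Lim_Ip_eq:
  "Lim (at_right (0::real)) (\<lambda>\<gamma>. Ip \<beta> W P (R2 - \<gamma>) R1) = (SUP \<gamma>\<in>{0<..}. Ip \<beta> W P (R2 - \<gamma>) R1)"
  unfolding Ip_def by (rule Lim_Jp_eq)

theorem mainTheorem9:
  fixes W :: "nat \<Rightarrow> 'x::countable \<Rightarrow> 'y::countable pmf"
    and X :: "nat \<Rightarrow> 'x set" and c :: "nat \<Rightarrow> 'x \<Rightarrow> real"
    and K \<beta> R1 R2 :: real
  assumes "0 < \<beta>" and "\<beta> < 1"
    and "\<forall>n. Xnck X c K n \<noteq> {}"
  shows "Cp \<beta> W X c K R2 R1 =
           (INF P\<in>Pck X c K. Lim (at_right (0::real)) (\<lambda>\<gamma>. Ip \<beta> W P (R2 - \<gamma>) R1))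
       \<and> Cp \<beta> W X c K R2 R1 =
           (INF P\<in>Pck X c K. SUP Q. Lim (at_right (0::real)) (\<lambda>\<gamma>. Jp \<beta> W P Q (R2 - \<gamma>) R1))
       \<and> (\<forall>\<epsilon>. 0 \<le> \<epsilon> \<and> \<epsilon> < 1 \<longrightarrow>
            Ceps \<beta> W X c K \<epsilon> R1 = (SUP P\<in>Pck X c K. Ieps \<beta> W P \<epsilon> R1)
          \<and> Ceps \<beta> W X c K \<epsilon> R1 = (SUP P\<in>Pck X c K. INF Q. Jeps \<beta> W P Q \<epsilon> R1))"
proof -
  note \<beta> = assms(1)
  define CP where "CP = Cp \<beta> W X c K R2 R1"
  have A: "CP \<le> (SUP \<gamma>\<in>{0<..}. Ip \<beta> W P (R2 - \<gamma>) R1)" if P: "P \<in> Pck X c K" for P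
  proof (rule ereal_le_real)
    fix z assume z: "(SUP \<gamma>\<in>{0<..}. Ip \<beta> W P (R2 - \<gamma>) R1) \<le> ereal z"
    show "CP \<le> ereal z"
    proof (rule ereal_le_epsilon2)
      fix e :: real assume e: "0 < e"
      have "(SUP \<gamma>\<in>{0<..}. Ip \<beta> W P (R2 - \<gamma>) R1) < ereal (z + e)"
      proof -
        have "ereal z < ereal (z + e)" using e by simp
        with z show ?thesis by (rule le_less_trans)
      qed
      then obtain \<Phi> where \<Phi>: "\<Phi> \<in> admissible_codes X c K" "ereal R2 \<le> code_rate \<beta> R1 \<Phi>"
        "code_err W \<Phi> \<le> ereal (z + e)"
        using achiev_diag[OF \<beta> P] by blast
      have "CP \<le> code_err W \<Phi>" unfolding CP_def Cp_def
        by (rule Inf_lower) (use \<Phi> in blast)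
      also have "\<dots> \<le> ereal (z + e)" by (rule \<Phi>(3))
      finally show "CP \<le> ereal z + ereal e" by simp
    qed
  qed
  have B: "(SUP \<gamma>\<in>{0<..}. Ip \<beta> W P (R2 - \<gamma>) R1) \<le> (SUP Q. SUP \<gamma>\<in>{0<..}. Jp \<beta> W P Q (R2 - \<gamma>) R1)" for P
    unfolding Ip_def by (rule SUP_upper) simp
  have C: "(INF P\<in>Pck X c K. SUP Q. SUP \<gamma>\<in>{0<..}. Jp \<beta> W P Q (R2 - \<gamma>) R1) \<le> CP"
    unfolding CP_def Cp_def
  proof (rule Inf_greatest, safe)
    fix \<Phi> :: "nat \<Rightarrow> ('x, 'y) code"
    assume adm: "\<Phi> \<in> admissible_codes X c K" and rate: "ereal R2 \<le> code_rate \<beta> R1 \<Phi>"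
    have "(INF P\<in>Pck X c K. SUP Q. SUP \<gamma>\<in>{0<..}. Jp \<beta> W P Q (R2 - \<gamma>) R1)
        \<le> (SUP Q. SUP \<gamma>\<in>{0<..}. Jp \<beta> W (code_pmf \<Phi>) Q (R2 - \<gamma>) R1)"
      by (rule INF_lower) (rule code_pmf_Pck[OF adm])
    also have "\<dots> \<le> code_err W \<Phi>"
    proof (intro SUP_least)
      fix Q \<gamma> assume "\<gamma> \<in> {0::real<..}"
      thus "Jp \<beta> W (code_pmf \<Phi>) Q (R2 - \<gamma>) R1 \<le> code_err W \<Phi>"
        using converse_asym[OF \<beta> adm rate] by simp
    qed
    finally show "(INF P\<in>Pck X c K. SUP Q. SUP \<gamma>\<in>{0<..}. Jp \<beta> W P Q (R2 - \<gamma>) R1) \<le> code_err W \<Phi>" .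
  qed
  have I1: "CP \<le> (INF P\<in>Pck X c K. SUP \<gamma>\<in>{0<..}. Ip \<beta> W P (R2 - \<gamma>) R1)"
    by (rule INF_greatest) (rule A)
  have I2: "(INF P\<in>Pck X c K. SUP \<gamma>\<in>{0<..}. Ip \<beta> W P (R2 - \<gamma>) R1)
      \<le> (INF P\<in>Pck X c K. SUP Q. SUP \<gamma>\<in>{0<..}. Jp \<beta> W P Q (R2 - \<gamma>) R1)"
    by (rule INF_mono) (use B in blast)
  have part1: "CP = (INF P\<in>Pck X c K. SUP \<gamma>\<in>{0<..}. Ip \<beta> W P (R2 - \<gamma>) R1)"
    using I1 I2 C by (intro antisym) auto
  have part2: "CP = (INF P\<in>Pck X c K. SUP Q. SUP \<gamma>\<in>{0<..}. Jp \<beta> W P Q (R2 - \<gamma>) R1)"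
    using I1 I2 C by (intro antisym) auto
  have part3: "Ceps \<beta> W X c K \<epsilon> R1 = (SUP P\<in>Pck X c K. Ieps \<beta> W P \<epsilon> R1)
          \<and> Ceps \<beta> W X c K \<epsilon> R1 = (SUP P\<in>Pck X c K. INF Q. Jeps \<beta> W P Q \<epsilon> R1)" for \<epsilon>
  proof -
    define CE where "CE = Ceps \<beta> W X c K \<epsilon> R1"
    have D: "Ieps \<beta> W P \<epsilon> R1 \<le> CE" if P: "P \<in> Pck X c K" for P
      unfolding Ieps_def
    proof (rule Sup_least, safe)
      fix R assume IR: "Ip \<beta> W P R R1 \<le> ereal \<epsilon>"
      show "ereal R \<le> CE"
      proof (rule ereal_le_epsilon2)
        fix \<delta> :: real assume \<delta>: "0 < \<delta>"
        have gap: "filterlim (\<lambda>n. ((R - \<delta>/2) - (R - \<delta>)) * real n powr \<beta>) at_top sequentially"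
          using \<delta> by (intro filterlim_tendsto_pos_mult_at_top[OF tendsto_const _ powr_seq_at_top[OF \<beta>]]) auto
        obtain \<Phi> where \<Phi>: "\<Phi> \<in> admissible_codes X c K" "ereal (R - \<delta>) \<le> code_rate \<beta> R1 \<Phi>"
          "code_err W \<Phi> \<le> Jp \<beta> W P (out_dist W P) (R - \<delta>/2) R1"
          using achiev_asym[OF \<beta> P _ gap tendsto_const, where W=W and ?R1.0=R1] \<delta>
          unfolding Jp_def by auto
        have "Jp \<beta> W P (out_dist W P) (R - \<delta>/2) R1 \<le> Ip \<beta> W P R R1"
          unfolding Ip_def by (rule Jp_mono) (use \<delta> in simp)
        hence "code_err W \<Phi> \<le> ereal \<epsilon>" using \<Phi>(3) IR by (auto intro: order_trans)
        hence "code_rate \<beta> R1 \<Phi> \<le> CE" unfolding CE_def Ceps_def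
          by (intro Sup_upper) (use \<Phi>(1) in blast)
        hence "ereal (R - \<delta>) \<le> CE" using \<Phi>(2) by (rule order_trans[rotated])
        hence "ereal (R - \<delta>) + ereal \<delta> \<le> CE + ereal \<delta>" by (rule add_right_mono)
        thus "ereal R \<le> CE + ereal \<delta>" by simp
      qed
    qed
    have E: "(INF Q. Jeps \<beta> W P Q \<epsilon> R1) \<le> Ieps \<beta> W P \<epsilon> R1" for P
      unfolding Ieps_def Ip_def Jeps_def[symmetric] by (rule INF_lower) simp
    have F: "CE \<le> (SUP P\<in>Pck X c K. INF Q. Jeps \<beta> W P Q \<epsilon> R1)"
      unfolding CE_def Ceps_def
    proof (rule Sup_least, safe)
      fix \<Phi> :: "nat \<Rightarrow> ('x, 'y) code"
      assume adm: "\<Phi> \<in> admissible_codes X c K" and err: "code_err W \<Phi> \<le> ereal \<epsilon>"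
      have "code_rate \<beta> R1 \<Phi> \<le> (INF Q. Jeps \<beta> W (code_pmf \<Phi>) Q \<epsilon> R1)"
      proof (rule INF_greatest)
        fix Q
        show "code_rate \<beta> R1 \<Phi> \<le> Jeps \<beta> W (code_pmf \<Phi>) Q \<epsilon> R1"
        proof (rule dense_le)
          fix z assume z: "z < code_rate \<beta> R1 \<Phi>"
          show "z \<le> Jeps \<beta> W (code_pmf \<Phi>) Q \<epsilon> R1"
          proof (cases z)
            case (real R)
            have rate: "ereal R \<le> code_rate \<beta> R1 \<Phi>" using z real by simp
            have "ereal R \<le> Jeps \<beta> W (code_pmf \<Phi>) Q \<epsilon> R1"
            proof (rule ereal_le_epsilon2)
              fix \<delta> :: real assume \<delta>: "0 < \<delta>"
              have "Jp \<beta> W (code_pmf \<Phi>) Q (R - \<delta>) R1 \<le> ereal \<epsilon>"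
                using converse_asym[OF \<beta> adm rate \<delta>] err by (rule order_trans)
              hence "ereal (R - \<delta>) \<le> Jeps \<beta> W (code_pmf \<Phi>) Q \<epsilon> R1"
                unfolding Jeps_def by (intro Sup_upper) blast
              hence "ereal (R - \<delta>) + ereal \<delta> \<le> Jeps \<beta> W (code_pmf \<Phi>) Q \<epsilon> R1 + ereal \<delta>"
                by (rule add_right_mono)
              thus "ereal R \<le> Jeps \<beta> W (code_pmf \<Phi>) Q \<epsilon> R1 + ereal \<delta>" by simp
            qed
            thus ?thesis using real by simp
          qed (use z in auto)
        qed
      qed
      also have "\<dots> \<le> (SUP P\<in>Pck X c K. INF Q. Jeps \<beta> W P Q \<epsilon> R1)"
        by (rule SUP_upper) (rule code_pmf_Pck[OF adm])
      finally show "code_rate \<beta> R1 \<Phi> \<le> (SUP P\<in>Pck X c K. INF Q. Jeps \<beta> W P Q \<epsilon> R1)" .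
    qed
    have J1: "(SUP P\<in>Pck X c K. INF Q. Jeps \<beta> W P Q \<epsilon> R1) \<le> (SUP P\<in>Pck X c K. Ieps \<beta> W P \<epsilon> R1)"
      by (rule SUP_mono) (use E in blast)
    have J2: "(SUP P\<in>Pck X c K. Ieps \<beta> W P \<epsilon> R1) \<le> CE"
      by (rule SUP_least) (rule D)
    show ?thesis unfolding CE_def[symmetric]
      using F J1 J2 by (intro conjI antisym) auto
  qed
  show ?thesis
    unfolding Lim_Ip_eq Lim_Jp_eq CP_def[symmetric]
    using part1 part2 part3 by blast
qed


end
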